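(* Let $\mu,P$ be Borel probability measures on $\mathbb{R}^d$ absolutely continuous w.r.t. Lebesgue measure, and let $u\in\mathbb{R}^d$ with $\mathrm{TD}(u;\mu)>0$. Then for every $\varepsilon\in[0,\mathrm{TD}(u;\mu))$ there exists $R>0$ such that $$\{x\in\partial\varphi_{\mu\to\nu}(u):\ \varphi_{\mu\to\nu}\in\Gamma_\varepsilon(P)\}\subset R\,\mathbb{B}.$$
   Context: $\mathbb{B}=\{x:\|x\|\leq1\}$; $\mathrm{TD}(u;\mu)=\min_{v\in\mathcal{S}^{d-1}}\mu(\{z:\langle v,z-u\rangle\geq0\})$; $\partial\psi(u)=\{x:\psi(z)\geq\psi(u)+\langle x,z-u\rangle\ \forall z\}$. $\mathcal{Q}_\varepsilon(P)=\{P+\varepsilon(Q-P):Q\text{ a Borel probability measure}\}\cap\{\text{probability measures absolutely continuous w.r.t. Lebesgue}\}$, and $\Gamma_\varepsilon(P)$ is the set of lower semicontinuous convex functions $\varphi_{\mu\to\nu}$ whose gradient pushes $\mu$ forward to some $\nu\in\mathcal{Q}_\varepsilon(P)$. *)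

theory Defs
  imports "HOL-Probability.Probability"
begin

definition ac_prob :: "'a::euclidean_space measure \<Rightarrow> bool" where
  "ac_prob M \<longleftrightarrow> prob_space M \<and> sets M = sets borel \<and> absolutely_continuous lborel M"

definition tukey_depth :: "'a::euclidean_space \<Rightarrow> 'a measure \<Rightarrow> real" where
  "tukey_depth u M = (INF v \<in> sphere 0 1. measure M {z. inner v (z - u) \<ge> 0})"

definition subdiff :: "('a::euclidean_space \<Rightarrow> ereal) \<Rightarrow> 'a \<Rightarrow> 'a set" where
  "subdiff \<psi> u = {x. \<forall>z. \<psi> z \<ge> \<psi> u + ereal (inner x (z - u))}"

definition lsc_convex :: "('a::euclidean_space \<Rightarrow> ereal) \<Rightarrow> bool" where
  "lsc_convex \<phi> \<longleftrightarrow>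
     (\<forall>x. \<phi> x \<noteq> -\<infinity>) \<and>
     (\<forall>x y t. 0 \<le> t \<and> t \<le> 1 \<longrightarrow>
        \<phi> ((1 - t) *\<^sub>R x + t *\<^sub>R y) \<le> ereal (1 - t) * \<phi> x + ereal t * \<phi> y) \<and>
     (\<forall>x c. c < \<phi> x \<longrightarrow> eventually (\<lambda>y. c < \<phi> y) (at x))"

definition grad_pushes :: "'a::euclidean_space measure \<Rightarrow> ('a \<Rightarrow> ereal) \<Rightarrow> 'a measure \<Rightarrow> bool" where
  "grad_pushes \<mu> \<phi> \<nu> \<longleftrightarrow>
     (\<exists>g \<in> borel_measurable \<mu>.
        (AE x in \<mu>. \<exists>e>0. (\<forall>y\<in>ball x e. \<bar>\<phi> y\<bar> \<noteq> \<infinity>) \<and>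
            ((\<lambda>y. real_of_ereal (\<phi> y)) has_derivative (\<lambda>h. inner (g x) h)) (at x))
        \<and> distr \<mu> borel g = \<nu>)"

definition Q_eps :: "real \<Rightarrow> 'a::euclidean_space measure \<Rightarrow> 'a measure set" where
  "Q_eps \<epsilon> P = {\<nu>. prob_space \<nu> \<and> sets \<nu> = sets borel \<and> absolutely_continuous lborel \<nu> \<and>
     (\<exists>Q. prob_space Q \<and> sets Q = sets borel \<and>
        (\<forall>A\<in>sets borel. measure \<nu> A = measure P A + \<epsilon> * (measure Q A - measure P A)))}"

definition Gamma_eps :: "'a::euclidean_space measure \<Rightarrow> real \<Rightarrow> 'a measure \<Rightarrow> ('a \<Rightarrow> ereal) set" where
  "Gamma_eps \<mu> \<epsilon> P = {\<phi>. lsc_convex \<phi> \<and> (\<exists>\<nu>\<in>Q_eps \<epsilon> P. grad_pushes \<mu> \<phi> \<nu>)}"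

end

theory Submission
  imports Defs
begin

lemma grad_ineq:
  fixes \<phi> :: "'a::euclidean_space \<Rightarrow> ereal"
  assumes cvx: "lsc_convex \<phi>" and fu: "\<phi> u = ereal c" and fy: "\<phi> y = ereal a"
    and der: "((\<lambda>z. real_of_ereal (\<phi> z)) has_derivative (\<lambda>h. inner G h)) (at y)"
  shows "inner G (u - y) \<le> c - a"
proof -
  define d where "d = u - y"
  define h where "h = (\<lambda>t::real. real_of_ereal (\<phi> (y + t *\<^sub>R d)))"
  have d1: "((\<lambda>t::real. y + t *\<^sub>R d) has_derivative (\<lambda>t. t *\<^sub>R d)) (at 0)"
    by (auto intro!: derivative_eq_intros)
  have der': "((\<lambda>z. real_of_ereal (\<phi> z)) has_derivative (\<lambda>h. inner G h)) (at (y + (0::real) *\<^sub>R d))"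
    using der by simp
  have "(h has_derivative ((\<lambda>h. inner G h) \<circ> (\<lambda>t. t *\<^sub>R d))) (at 0)"
    using diff_chain_at[OF d1 der'] unfolding h_def by (simp add: o_def)
  moreover have "((\<lambda>h. inner G h) \<circ> (\<lambda>t. t *\<^sub>R d)) = (*) (inner G d)"
    by (simp add: fun_eq_iff)
  ultimately have "(h has_field_derivative (inner G d)) (at 0)"
    by (simp add: has_field_derivative_def)
  hence "(h has_field_derivative (inner G d)) (at 0 within {0<..})"
    by (rule has_field_derivative_at_within)
  hence lim: "((\<lambda>t. (h t - h 0) / (t - 0)) \<longlongrightarrow> inner G d) (at_right 0)"
    by (simp add: has_field_derivative_iff)
  have ev: "eventually (\<lambda>t. (h t - h 0) / (t - 0) \<le> c - a) (at_right (0::real))"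
    unfolding eventually_at_right_field
  proof (intro exI[of _ 1] conjI allI impI)
    fix t :: real assume t: "0 < t" "t < 1"
    have "\<phi> ((1 - t) *\<^sub>R y + t *\<^sub>R u) \<le> ereal (1 - t) * \<phi> y + ereal t * \<phi> u"
      using cvx t unfolding lsc_convex_def by auto
    also have "\<dots> = ereal ((1 - t) * a + t * c)" using fy fu by simp
    finally have le: "\<phi> ((1 - t) *\<^sub>R y + t *\<^sub>R u) \<le> ereal ((1 - t) * a + t * c)" .
    have eq: "(1 - t) *\<^sub>R y + t *\<^sub>R u = y + t *\<^sub>R d"
      by (simp add: d_def algebra_simps)
    have nm: "\<phi> (y + t *\<^sub>R d) \<noteq> -\<infinity>" using cvx unfolding lsc_convex_def by auto
    have "h t \<le> (1 - t) * a + t * c"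
      using le nm unfolding h_def eq by (cases "\<phi> (y + t *\<^sub>R d)") auto
    moreover have "h 0 = a" unfolding h_def using fy by simp
    ultimately have "h t - h 0 \<le> t * (c - a)" by (simp add: algebra_simps)
    thus "(h t - h 0) / (t - 0) \<le> c - a" using t by (simp add: divide_simps mult.commute)
  qed simp
  have "inner G d \<le> c - a"
    by (rule tendsto_upperbound[OF lim ev]) simp
  thus ?thesis by (simp add: d_def)
qed

theorem mainTheorem8:
  fixes \<mu> P :: "'a::euclidean_space measure" and u :: 'a and \<epsilon> :: real
  assumes "ac_prob \<mu>" and "ac_prob P"
    and "tukey_depth u \<mu> > 0"
    and "0 \<le> \<epsilon>" and "\<epsilon> < tukey_depth u \<mu>"
  shows "\<exists>R>0. {x. \<exists>\<phi>\<in>Gamma_eps \<mu> \<epsilon> P. x \<in> subdiff \<phi> u} \<subseteq> cball 0 R"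
proof -
  from assms(1) have mu: "prob_space \<mu>" "sets \<mu> = sets borel" "absolutely_continuous lborel \<mu>"
    unfolding ac_prob_def by auto
  from assms(2) have Pp: "prob_space P" "sets P = sets borel" unfolding ac_prob_def by auto
  interpret M: prob_space \<mu> by fact
  interpret PP: prob_space P by fact
  have spmu: "space \<mu> = UNIV" using sets_eq_imp_space_eq[OF mu(2)] by simp
  define T where "T = tukey_depth u \<mu>"
  define \<eta> where "\<eta> = (T - \<epsilon>)/2"
  have eta: "\<eta> > 0" "\<epsilon> + \<eta> < T" using assms(5) by (auto simp: \<eta>_def T_def field_simps)
  define D where "D = (\<lambda>v \<delta> M. {y. \<delta> \<le> inner v (y - u)} \<inter> cball u M)"
  have Dsets: "D v \<delta> M \<in> sets \<mu>" for v \<delta> M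
  proof -
    have "closed (D v \<delta> M)" unfolding D_def
      by (intro closed_Int closed_cball closed_Collect_le continuous_intros)
    thus ?thesis using mu(2) by simp
  qed
  have hyp0: "measure \<mu> {y. inner v (y - u) = 0} = 0" if "v \<noteq> 0" for v
  proof -
    have eq: "{y. inner v (y - u) = 0} = {y. inner v y = inner v u}" by (auto simp: inner_diff_right)
    have "negligible {y. inner v y = inner v u}" using negligible_hyperplane that by blast
    hence "{y. inner v y = inner v u} \<in> null_sets lebesgue" by (simp add: negligible_iff_null_sets)
    moreover have "{y. inner v y = inner v u} \<in> sets lborel"
      by (simp add: closed_hyperplane)
    ultimately have "{y. inner v y = inner v u} \<in> null_sets lborel"
      using null_sets_completion_iff by blast
    hence "{y. inner v y = inner v u} \<in> null_sets \<mu>"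
      using mu(3) unfolding absolutely_continuous_def by blast
    thus ?thesis unfolding eq by (simp add: measure_def null_setsD1)
  qed
  have L1: "\<exists>n::nat. measure \<mu> (D v (1/Suc n) (Suc n)) > \<epsilon> + \<eta>" if v: "v \<in> sphere 0 1" for v
  proof -
    let ?A = "\<lambda>n::nat. D v (1/Suc n) (Suc n)"
    have inc: "incseq ?A"
      unfolding incseq_def D_def
    proof (intro allI impI subsetI)
      fix m n :: nat and y assume mn: "m \<le> n" and y: "y \<in> {y. 1/real (Suc m) \<le> inner v (y-u)} \<inter> cball u (Suc m)"
      have "1/real (Suc n) \<le> 1/real (Suc m)" using mn by (simp add: frac_le)
      moreover have "real (Suc m) \<le> real (Suc n)" using mn by simp
      moreover have "1/real (Suc m) \<le> inner v (y-u)" "dist u y \<le> real (Suc m)" using y by auto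
      ultimately have "1/real (Suc n) \<le> inner v (y-u)" "dist u y \<le> real (Suc n)" by linarith+
      thus "y \<in> {y. 1/real (Suc n) \<le> inner v (y-u)} \<inter> cball u (Suc n)"
        by simp
    qed
    have U: "(\<Union>n. ?A n) = {y. 0 < inner v (y - u)}"
    proof
      show "(\<Union>n. ?A n) \<subseteq> {y. 0 < inner v (y - u)}"
      proof
        fix y assume "y \<in> (\<Union>n. ?A n)"
        then obtain n where "y \<in> ?A n" by blast
        hence "1/real (Suc n) \<le> inner v (y - u)" unfolding D_def by simp
        moreover have "0 < 1/real (Suc n)" by simp
        ultimately have "0 < inner v (y - u)" by linarith
        thus "y \<in> {y. 0 < inner v (y - u)}" by simp
      qed
      show "{y. 0 < inner v (y - u)} \<subseteq> (\<Union>n. ?A n)"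
      proof
        fix y assume "y \<in> {y. 0 < inner v (y - u)}"
        hence p: "0 < inner v (y - u)" by simp
        obtain n1 where n1: "inverse (real (Suc n1)) < inner v (y - u)" using reals_Archimedean[OF p] by blast
        obtain n2 where n2: "dist u y \<le> real n2" using real_arch_simple by blast
        define n where "n = max n1 n2"
        have "1 / real (Suc n) \<le> 1 / real (Suc n1)" by (simp add: n_def frac_le)
        hence "1 / real (Suc n) \<le> inner v (y - u)" using n1 by (simp add: inverse_eq_divide)
        moreover have "dist u y \<le> real (Suc n)" using n2 by (simp add: n_def)
        ultimately have "y \<in> ?A n" unfolding D_def by simp
        thus "y \<in> (\<Union>n. ?A n)" by (rule UN_I[OF UNIV_I])
      qed
    qed
    have rs: "range ?A \<subseteq> sets \<mu>" using Dsets by auto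
    have lim: "(\<lambda>n. measure \<mu> (?A n)) \<longlonglongrightarrow> measure \<mu> {y. 0 < inner v (y - u)}"
      using M.finite_Lim_measure_incseq[OF rs inc] U by simp
    have "T \<le> measure \<mu> {z. inner v (z - u) \<ge> 0}"
      unfolding T_def tukey_depth_def by (rule cINF_lower[OF _ v]) (rule bdd_belowI[where m=0], auto)
    also have "\<dots> \<le> measure \<mu> ({y. 0 < inner v (y - u)} \<union> {y. inner v (y - u) = 0})"
    proof (rule M.finite_measure_mono)
      show "{z. inner v (z - u) \<ge> 0} \<subseteq> {y. 0 < inner v (y - u)} \<union> {y. inner v (y - u) = 0}"
        by auto
      have "closed {y. 0 \<le> inner v (y - u)}" by (intro closed_Collect_le continuous_intros)
      moreover have "{y. 0 < inner v (y - u)} \<union> {y. inner v (y - u) = 0} = {y. 0 \<le> inner v (y - u)}" by auto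
      ultimately show "{y. 0 < inner v (y - u)} \<union> {y. inner v (y - u) = 0} \<in> sets \<mu>"
        using mu(2) by simp
    qed
    also have "\<dots> \<le> measure \<mu> {y. 0 < inner v (y - u)} + measure \<mu> {y. inner v (y - u) = 0}"
    proof (rule measure_Un_le)
      have "open {y. 0 < inner v (y - u)}" by (intro open_Collect_less continuous_intros)
      thus "{y. 0 < inner v (y - u)} \<in> sets \<mu>" using mu(2) by simp
      have "closed {y. inner v (y - u) = 0}" by (intro closed_Collect_eq continuous_intros)
      thus "{y. inner v (y - u) = 0} \<in> sets \<mu>" using mu(2) by simp
    qed
    also have "\<dots> = measure \<mu> {y. 0 < inner v (y - u)}" proof -
      have "v \<noteq> 0" using v by auto
      thus ?thesis using hyp0[of v] by simp
    qed
    finally have "\<epsilon> + \<eta> < measure \<mu> {y. 0 < inner v (y - u)}" using eta by simp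
    from order_tendstoD(1)[OF lim this] show ?thesis
      by (auto simp: eventually_sequentially)
  qed
  obtain N where N: "\<And>v. v \<in> sphere 0 1 \<Longrightarrow> measure \<mu> (D v (1/Suc (N v)) (Suc (N v))) > \<epsilon> + \<eta>"
  proof -
    define N where "N = (\<lambda>v. SOME n::nat. measure \<mu> (D v (1/Suc n) (Suc n)) > \<epsilon> + \<eta>)"
    have "measure \<mu> (D v (1/Suc (N v)) (Suc (N v))) > \<epsilon> + \<eta>" if "v \<in> sphere 0 1" for v
      unfolding N_def by (rule someI_ex[OF L1[OF that]])
    thus ?thesis using that by blast
  qed
  define rad where "rad = (\<lambda>v. 1 / (2 * (real (Suc (N v)))^2))"
  have radpos: "rad v > 0" for v unfolding rad_def by simp
  have "compact (sphere (0::'a) 1)" by simp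
  moreover have cov: "sphere 0 1 \<subseteq> (\<Union>v\<in>sphere 0 1. ball v (rad v))"
  proof
    fix w :: 'a assume w: "w \<in> sphere 0 1"
    show "w \<in> (\<Union>v\<in>sphere 0 1. ball v (rad v))" by (rule UN_I[OF w]) (simp add: radpos)
  qed
  ultimately obtain F where F: "F \<subseteq> sphere 0 1" "finite F" "sphere 0 1 \<subseteq> (\<Union>v\<in>F. ball v (rad v))"
    using compactE_image[where f="\<lambda>v. ball v (rad v)" and C = "sphere 0 1" and S="sphere 0 1"]
    by blast
  define K where "K = Max (N ` F)"
  define \<delta> where "\<delta> = 1 / (2 * real (Suc K))"
  define Mr where "Mr = real (Suc K)"
  have dpos: "\<delta> > 0" "Mr > 0" by (auto simp: \<delta>_def Mr_def)
  have L2: "measure \<mu> (D w \<delta> Mr) > \<epsilon> + \<eta>" if w: "w \<in> sphere 0 1" for w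
  proof -
    obtain v where v: "v \<in> F" "dist v w < rad v" using F(3) w by auto
    define n where "n = N v"
    define s where "s = real (Suc n)"
    have nK: "n \<le> K" unfolding n_def K_def using v(1) F(2) by simp
    have sub: "D v (1/s) s \<subseteq> D w \<delta> Mr"
    proof
      fix y assume "y \<in> D v (1/s) s"
      hence y1: "1/s \<le> inner v (y - u)" and y2: "norm (y - u) \<le> s"
        unfolding D_def by (auto simp: dist_norm norm_minus_commute)
      have "inner (v - w) (y - u) \<le> norm (v - w) * norm (y - u)" by (rule norm_cauchy_schwarz)
      also have "\<dots> \<le> rad v * s"
        using v(2) y2 radpos[of v] by (intro mult_mono) (auto simp: dist_norm less_imp_le)
      also have "rad v * s = 1 / (2 * s)" unfolding rad_def s_def n_def
        by (simp add: power2_eq_square)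
      finally have cs: "inner (v - w) (y - u) \<le> 1 / (2 * s)" .
      have iw: "inner w (y - u) = inner v (y - u) - inner (v - w) (y - u)"
        by (simp add: inner_diff_left)
      have half: "1 / s - 1 / (2 * s) = 1 / (2 * s)" by (simp add: s_def field_simps)
      have dl: "\<delta> \<le> 1 / (2 * s)" unfolding \<delta>_def s_def using nK by (simp add: frac_le)
      have "\<delta> \<le> inner w (y - u)" using y1 cs iw half dl by linarith
      moreover have "s \<le> Mr" unfolding s_def Mr_def using nK by simp
      hence "dist u y \<le> Mr" using y2 by (simp add: dist_norm norm_minus_commute)
      ultimately show "y \<in> D w \<delta> Mr" unfolding D_def by simp
    qed
    have "\<epsilon> + \<eta> < measure \<mu> (D v (1/s) s)" using N[of v] v(1) F(1) by (auto simp: s_def n_def)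
    also have "\<dots> \<le> measure \<mu> (D w \<delta> Mr)" by (rule M.finite_measure_mono[OF sub Dsets])
    finally show ?thesis .
  qed
  have bset: "{w::'a. r < norm w} \<in> sets borel" for r
  proof -
    have "open {w::'a. r < norm w}" by (intro open_Collect_less continuous_intros)
    thus ?thesis by simp
  qed
  obtain r where r: "r > 0" "measure P {w. r < norm w} < \<eta>"
  proof -
    let ?B = "\<lambda>n::nat. {w::'a. real n < norm w}"
    have dec: "decseq ?B" unfolding decseq_def
    proof (intro allI impI subsetI)
      fix m n :: nat and w :: 'a assume mn: "m \<le> n" and w: "w \<in> ?B n"
      have "real m \<le> real n" using mn by simp
      moreover have "real n < norm w" using w by simp
      ultimately have "real m < norm w" by linarith
      thus "w \<in> ?B m" by simp
    qed
    have I: "(\<Inter>n. ?B n) = {}"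
    proof (rule equals0I)
      fix w assume w: "w \<in> (\<Inter>n. ?B n)"
      obtain n where n: "norm w \<le> real n" using real_arch_simple by blast
      have "w \<in> ?B n" using w by blast
      thus False using n by simp
    qed
    have rs: "range ?B \<subseteq> sets P"
    proof
      fix X assume "X \<in> range ?B"
      then obtain n where "X = ?B n" by blast
      thus "X \<in> sets P" using bset[of "real n"] Pp(2) by simp
    qed
    have "(\<lambda>n. measure P (?B n)) \<longlonglongrightarrow> 0"
      using PP.finite_Lim_measure_decseq[OF rs dec] I by simp
    from order_tendstoD(2)[OF this eta(1)] obtain n0 where
      n0: "\<And>n. n \<ge> n0 \<Longrightarrow> measure P (?B n) < \<eta>" by (auto simp: eventually_sequentially)
    have "measure P (?B (Suc n0)) < \<eta>" by (rule n0) simp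
    thus ?thesis using that[of "real (Suc n0)"] by simp
  qed
  define R where "R = r * Mr / \<delta> + 1"
  have "0 < r * Mr / \<delta>" using r(1) dpos by (intro divide_pos_pos mult_pos_pos)
  hence Rpos: "R > 0" unfolding R_def by linarith
  show ?thesis
  proof (intro exI[of _ R] conjI subsetI)
    show "R > 0" by (fact Rpos)
    fix x assume "x \<in> {x. \<exists>\<phi>\<in>Gamma_eps \<mu> \<epsilon> P. x \<in> subdiff \<phi> u}"
    then obtain \<phi> where phi: "\<phi> \<in> Gamma_eps \<mu> \<epsilon> P" and xs: "x \<in> subdiff \<phi> u" by auto
    from phi obtain \<nu> where cvx: "lsc_convex \<phi>" and nu: "\<nu> \<in> Q_eps \<epsilon> P" and gp: "grad_pushes \<mu> \<phi> \<nu>"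
      unfolding Gamma_eps_def by auto
    from gp obtain g where gm: "g \<in> borel_measurable \<mu>"
      and ae: "AE y in \<mu>. \<exists>e>0. (\<forall>z\<in>ball y e. \<bar>\<phi> z\<bar> \<noteq> \<infinity>) \<and>
            ((\<lambda>z. real_of_ereal (\<phi> z)) has_derivative (\<lambda>h. inner (g y) h)) (at y)"
      and dis: "distr \<mu> borel g = \<nu>"
      unfolding grad_pushes_def by blast
    from nu obtain Q where Q: "prob_space Q"
      and nuQ: "\<forall>A\<in>sets borel. measure \<nu> A = measure P A + \<epsilon> * (measure Q A - measure P A)"
      unfolding Q_eps_def by blast
    have fu: "\<phi> u \<noteq> \<infinity>"
    proof
      assume inf: "\<phi> u = \<infinity>"
      have allinf: "\<phi> z = \<infinity>" for z using xs inf unfolding subdiff_def by (auto split: if_splits)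
      have "AE y in \<mu>. False" using ae
      proof eventually_elim
        case (elim y)
        then obtain e where "e > 0" "\<forall>z\<in>ball y e. \<bar>\<phi> z\<bar> \<noteq> \<infinity>" by blast
        hence "\<bar>\<phi> y\<bar> \<noteq> \<infinity>" by auto
        thus False using allinf by simp
      qed
      thus False using M.AE_False by simp
    qed
    moreover have "\<phi> u \<noteq> -\<infinity>" using cvx unfolding lsc_convex_def by auto
    ultimately obtain c where c: "\<phi> u = ereal c" by (cases "\<phi> u") auto
    show "x \<in> cball 0 R"
    proof (rule ccontr)
      assume "x \<notin> cball 0 R"
      hence xR: "norm x > R" by simp
      hence xnz: "x \<noteq> 0" using Rpos by auto
      define v where "v = x /\<^sub>R norm x"
      have v: "v \<in> sphere 0 1" using xnz by (simp add: v_def)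
      have big: "r * Mr < norm x * \<delta>"
      proof -
        have "R * \<delta> = r * Mr + \<delta>" unfolding R_def using dpos by (simp add: field_simps)
        moreover have "R * \<delta> < norm x * \<delta>" using xR dpos by simp
        ultimately show ?thesis using dpos by simp
      qed
      have key: "AE y in \<mu>. y \<in> D v \<delta> Mr \<longrightarrow> y \<in> g -` {w. r < norm w} \<inter> space \<mu>"
        using ae
      proof eventually_elim
        case (elim y)
        then obtain e where e: "e > 0" "\<forall>z\<in>ball y e. \<bar>\<phi> z\<bar> \<noteq> \<infinity>"
          and der: "((\<lambda>z. real_of_ereal (\<phi> z)) has_derivative (\<lambda>h. inner (g y) h)) (at y)" by blast
        hence "\<bar>\<phi> y\<bar> \<noteq> \<infinity>" by auto
        then obtain a where a: "\<phi> y = ereal a" by (cases "\<phi> y") auto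
        have gi: "inner (g y) (u - y) \<le> c - a" by (rule grad_ineq[OF cvx c a der])
        have "ereal c + ereal (inner x (y - u)) \<le> \<phi> y" using xs c unfolding subdiff_def by auto
        hence si: "c + inner x (y - u) \<le> a" using a by simp
        show ?case
        proof
          assume yD: "y \<in> D v \<delta> Mr"
          hence y1: "\<delta> \<le> inner v (y - u)" and y2: "norm (y - u) \<le> Mr"
            by (auto simp: D_def dist_norm norm_minus_commute)
          have xv: "inner x (y - u) = norm x * inner v (y - u)" using xnz by (simp add: v_def)
          have "norm x * \<delta> \<le> inner x (y - u)" unfolding xv using y1 by (simp add: mult_left_mono)
          also have "inner x (y - u) \<le> inner (g y) (y - u)"
          proof -
            have "inner (g y) (y - u) = - inner (g y) (u - y)"
              by (simp add: inner_diff_right)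
            thus ?thesis using gi si by simp
          qed
          also have "\<dots> \<le> norm (g y) * norm (y - u)" by (rule norm_cauchy_schwarz)
          also have "\<dots> \<le> norm (g y) * Mr" using y2 by (simp add: mult_left_mono)
          finally have "norm x * \<delta> \<le> norm (g y) * Mr" .
          hence "r * Mr < norm (g y) * Mr" using big by simp
          hence "r < norm (g y)" using dpos by simp
          thus "y \<in> g -` {w. r < norm w} \<inter> space \<mu>" using spmu by simp
        qed
      qed
      let ?S = "{w::'a. r < norm w}"
      have "\<epsilon> + \<eta> < measure \<mu> (D v \<delta> Mr)" by (rule L2[OF v])
      also have "\<dots> \<le> measure \<mu> (g -` ?S \<inter> space \<mu>)"
        by (rule M.finite_measure_mono_AE[OF key]) (rule measurable_sets[OF gm bset])
      also have "\<dots> = measure \<nu> ?S" using measure_distr[OF gm bset] dis by simp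
      also have "\<dots> = measure P ?S + \<epsilon> * (measure Q ?S - measure P ?S)" using nuQ bset by blast
      also have "\<dots> \<le> measure P ?S + \<epsilon>"
      proof -
        have "measure Q ?S \<le> 1" using prob_space.prob_le_1[OF Q] .
        moreover have "0 \<le> measure P ?S" by (rule measure_nonneg)
        ultimately have "measure Q ?S - measure P ?S \<le> 1" by linarith
        thus ?thesis using assms(4) by (simp add: mult_left_le)
      qed
      also have "\<dots> < \<eta> + \<epsilon>" using r(2) by simp
      finally show False by simp
    qed
  qed
qed

end
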